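(* An oval in $\mathbb{R}^{2}$ is an ellipse centered at the origin if and only if its support function $h$ satisfies $(h^{2})'''+4(h^{2})'=0$.
   Context: Identify $\mathbb{R}^{2}\cong\mathbb{C}$. An oval is a $C^{2}$ embedded closed plane curve with nowhere-vanishing curvature. The support function of an oval $\mathcal{O}$ is $h(\theta)=\sup_{p\in\mathcal{O}}p\cdot e^{i\theta}$, regarded as a $2\pi$-periodic function of $\theta\in\mathbb{R}$. *)

theory Defs
  imports "HOL-Analysis.Analysis"
begin

definition oval_param :: "(real \<Rightarrow> complex) \<Rightarrow> bool" where
  "oval_param g \<longleftrightarrow>
     (\<forall>t. g (t + 1) = g t) \<and>
     inj_on g {0..<1} \<and>
     (\<exists>g1 g2.
        (\<forall>t. (g has_vector_derivative g1 t) (at t)) \<and>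
        (\<forall>t. (g1 has_vector_derivative g2 t) (at t)) \<and>
        continuous_on UNIV g2 \<and>
        (\<forall>t. g1 t \<noteq> 0) \<and>
        (\<forall>t. Im (cnj (g1 t) * g2 t) / (cmod (g1 t)) ^ 3 \<noteq> 0))"

definition is_oval :: "complex set \<Rightarrow> bool" where
  "is_oval C \<longleftrightarrow> (\<exists>g. oval_param g \<and> C = g ` {0..1})"

definition support_fun :: "complex set \<Rightarrow> real \<Rightarrow> real" where
  "support_fun C \<theta> = (SUP p\<in>C. p \<bullet> cis \<theta>)"

definition is_centered_ellipse :: "complex set \<Rightarrow> bool" where
  "is_centered_ellipse E \<longleftrightarrow>
     (\<exists>a b \<phi>. a > 0 \<and> b > 0 \<and>
        E = {cis \<phi> * Complex (a * cos t) (b * sin t) | t. True})"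

end

theory Submission
  imports Defs
begin



lemma sphere_self_embed_surj:
  fixes f :: "complex \<Rightarrow> complex"
  assumes contf: "continuous_on (sphere 0 1) f" and injf: "inj_on f (sphere 0 1)"
    and fim: "f ` sphere 0 1 \<subseteq> sphere 0 1"
  shows "f ` sphere 0 1 = sphere 0 1"
proof (rule ccontr)
  assume "f ` sphere 0 1 \<noteq> sphere 0 1"
  then obtain c where c: "c \<in> sphere (0::complex) 1" "c \<notin> f ` sphere 0 1" using fim by blast
  have "(sphere (0::complex) 1 - {c}) homeomorphic {x::complex. \<i> \<bullet> x = 0}"
    by (rule homeomorphic_punctured_sphere_hyperplane) (use c in auto)
  then obtain j k where hom: "homeomorphism (sphere (0::complex) 1 - {c}) {x::complex. \<i> \<bullet> x = 0} j k"
    using homeomorphic_def by blast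
  define F where "F = (\<lambda>z. Re (j (f z)))"
  have fim2: "f ` sphere 0 1 \<subseteq> sphere 0 1 - {c}" using fim c by blast
  have "continuous_on (sphere 0 1) F"
    unfolding F_def
    by (rule continuous_on_Re, rule continuous_on_compose2[OF homeomorphism_cont1[OF hom] contf fim2])
  moreover have "inj_on F (sphere 0 1)"
  proof
    fix x y assume xy: "x \<in> sphere (0::complex) 1" "y \<in> sphere (0::complex) 1" "F x = F y"
    have jx: "j (f x) \<in> {x::complex. \<i> \<bullet> x = 0}" "j (f y) \<in> {x::complex. \<i> \<bullet> x = 0}"
      using hom fim2 xy unfolding homeomorphism_def by blast+
    then have jeq: "j (f x) = j (f y)" using xy(3) unfolding F_def
      by (simp add: complex_eq_iff inner_complex_def)
    have fx: "f x \<in> sphere 0 1 - {c}" "f y \<in> sphere 0 1 - {c}" using fim2 xy(1,2) imageI by blast+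
    have "f x = k (j (f x))" by (rule sym, rule homeomorphism_apply1[OF hom fx(1)])
    also have "\<dots> = k (j (f y))" by (simp only: jeq)
    also have "\<dots> = f y" by (rule homeomorphism_apply1[OF hom fx(2)])
    finally have "f x = f y" .
    then show "x = y" using inj_on_eq_iff[OF injf xy(1) xy(2)] by simp
  qed
  ultimately have "DIM(complex) \<le> DIM(real)"
    by (intro no_embedding_sphere_lowdim[of 0 1 F]) auto
  then show False by simp
qed

lemma homeo_circle_subset_eq:
  fixes X Y :: "complex set"
  assumes "X homeomorphic sphere (0::complex) 1" "Y homeomorphic sphere (0::complex) 1" and YX: "Y \<subseteq> X"
  shows "Y = X"
proof -
  obtain H H' where hH: "homeomorphism X (sphere (0::complex) 1) H H'" using assms(1) homeomorphic_def by blast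
  have "sphere (0::complex) 1 homeomorphic Y" using assms(2) by (subst homeomorphic_sym)
  then obtain F F' where hF: "homeomorphism (sphere (0::complex) 1) Y F F'" using homeomorphic_def by blast
  have FS: "F ` sphere (0::complex) 1 = Y" by (rule homeomorphism_image1[OF hF])
  have HX: "H ` X = sphere (0::complex) 1" by (rule homeomorphism_image1[OF hH])
  have H'H: "H' (H x) = x" if "x \<in> X" for x by (rule homeomorphism_apply1[OF hH that])
  have F'F: "F' (F x) = x" if "x \<in> sphere (0::complex) 1" for x by (rule homeomorphism_apply1[OF hF that])
  have "(H \<circ> F) ` sphere (0::complex) 1 = sphere (0::complex) 1"
  proof (rule sphere_self_embed_surj)
    have "continuous_on (F ` sphere (0::complex) 1) H"
      unfolding FS by (rule continuous_on_subset[OF homeomorphism_cont1[OF hH] YX])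
    then show "continuous_on (sphere (0::complex) 1) (H \<circ> F)"
      by (rule continuous_on_compose[OF homeomorphism_cont1[OF hF]])
    show "inj_on (H \<circ> F) (sphere (0::complex) 1)"
    proof
      fix x y assume x: "x \<in> sphere (0::complex) 1" and y: "y \<in> sphere (0::complex) 1"
        and e: "(H \<circ> F) x = (H \<circ> F) y"
      have Fx: "F x \<in> X" "F y \<in> X" using x y FS YX by blast+
      have "F x = H' (H (F x))" using H'H[OF Fx(1)] by simp
      also have "\<dots> = H' (H (F y))" using e by simp
      also have "\<dots> = F y" using H'H[OF Fx(2)] by simp
      finally have "F x = F y" .
      then have "F' (F x) = F' (F y)" by simp
      then show "x = y" using F'F[OF x] F'F[OF y] by simp
    qed
    show "(H \<circ> F) ` sphere (0::complex) 1 \<subseteq> sphere (0::complex) 1"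
    proof -
      have "H ` Y \<subseteq> H ` X" by (rule image_mono[OF YX])
      then show ?thesis unfolding image_comp[symmetric] FS HX .
    qed
  qed
  then have HY: "H ` Y = H ` X" unfolding image_comp[symmetric] FS HX .
  have "Y = H' ` H ` Y"
  proof -
    have "H' ` H ` Y = (\<lambda>x. H' (H x)) ` Y" by (simp add: image_image)
    also have "\<dots> = (\<lambda>x. x) ` Y" using H'H YX by (intro image_cong) auto
    finally show ?thesis by simp
  qed
  also have "\<dots> = H' ` H ` X" unfolding HY ..
  also have "\<dots> = X"
  proof -
    have "H' ` H ` X = (\<lambda>x. H' (H x)) ` X" by (simp add: image_image)
    also have "\<dots> = (\<lambda>x. x) ` X" using H'H by (intro image_cong) auto
    finally show ?thesis by simp
  qed
  finally show ?thesis .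
qed



lemma inner_cis_mult:
  "(cis \<phi> * Complex x y) \<bullet> cis \<theta> = x * cos (\<theta> - \<phi>) + y * sin (\<theta> - \<phi>)"
  by (simp add: inner_complex_def cos_diff sin_diff algebra_simps)

lemma cs_bound:
  fixes u v X Y :: real
  assumes "X\<^sup>2 + Y\<^sup>2 = 1"
  shows "u * X + v * Y \<le> sqrt (u\<^sup>2 + v\<^sup>2)"
proof (rule real_le_rsqrt)
  have "(u\<^sup>2 + v\<^sup>2) * (X\<^sup>2 + Y\<^sup>2) - (u * X + v * Y)\<^sup>2 = (u * Y - v * X)\<^sup>2"
    by (simp add: power2_eq_square algebra_simps)
  then have "(u * X + v * Y)\<^sup>2 = (u\<^sup>2 + v\<^sup>2) - (u * Y - v * X)\<^sup>2" using assms by simp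
  then show "(u * X + v * Y)\<^sup>2 \<le> u\<^sup>2 + v\<^sup>2" using zero_le_power2[of "u * Y - v * X"] by linarith
qed

lemma ellipse_support:
  fixes a b \<phi> \<theta> :: real
  assumes a: "a > 0" and b: "b > 0"
  shows "support_fun {cis \<phi> * Complex (a * cos t) (b * sin t) | t. True} \<theta>
       = sqrt ((a * cos (\<theta> - \<phi>))\<^sup>2 + (b * sin (\<theta> - \<phi>))\<^sup>2)"
proof -
  define u where "u = a * cos (\<theta> - \<phi>)"
  define v where "v = b * sin (\<theta> - \<phi>)"
  define S where "S = sqrt (u\<^sup>2 + v\<^sup>2)"
  have eqset: "{cis \<phi> * Complex (a * cos t) (b * sin t) | t. True} = range (\<lambda>t. cis \<phi> * Complex (a * cos t) (b * sin t))"
    by auto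
  have val: "(cis \<phi> * Complex (a * cos t) (b * sin t)) \<bullet> cis \<theta> = u * cos t + v * sin t" for t
    by (simp add: inner_cis_mult u_def v_def algebra_simps)
  have "u\<^sup>2 + v\<^sup>2 > 0"
  proof -
    have "cos (\<theta> - \<phi>) \<noteq> 0 \<or> sin (\<theta> - \<phi>) \<noteq> 0" 
    proof (rule ccontr)
      assume "\<not> (cos (\<theta> - \<phi>) \<noteq> 0 \<or> sin (\<theta> - \<phi>) \<noteq> 0)"
      then have "cos (\<theta> - \<phi>) = 0" "sin (\<theta> - \<phi>) = 0" by auto
      then show False using sin_cos_squared_add[of "\<theta>-\<phi>"] by simp
    qed
    then show ?thesis
    proof
      assume "cos (\<theta> - \<phi>) \<noteq> 0"
      then have "u\<^sup>2 > 0" using a unfolding u_def by simp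
      then show ?thesis by (simp add: add_pos_nonneg)
    next
      assume "sin (\<theta> - \<phi>) \<noteq> 0"
      then have "v\<^sup>2 > 0" using b unfolding v_def by simp
      then show ?thesis by (simp add: add_nonneg_pos)
    qed
  qed
  then have Spos: "S > 0" unfolding S_def by simp
  have SS: "S\<^sup>2 = u\<^sup>2 + v\<^sup>2" unfolding S_def by simp
  have "(u/S)\<^sup>2 + (v/S)\<^sup>2 = (u\<^sup>2 + v\<^sup>2) / S\<^sup>2" by (simp add: power_divide add_divide_distrib)
  also have "\<dots> = 1" using SS \<open>u\<^sup>2 + v\<^sup>2 > 0\<close> by (metis divide_self less_irrefl)
  finally have "(u/S)\<^sup>2 + (v/S)\<^sup>2 = 1" .
  then obtain t0 where t0: "u/S = cos t0" "v/S = sin t0" by (rule sincos_total_2pi)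
  have "u * cos t0 + v * sin t0 = S"
  proof -
    have "u * cos t0 + v * sin t0 = u * (u/S) + v * (v/S)" using t0 by simp
    also have "\<dots> = (u\<^sup>2 + v\<^sup>2) / S" by (simp add: power2_eq_square add_divide_distrib)
    also have "\<dots> = S\<^sup>2 / S" using SS by simp
    also have "\<dots> = S" using Spos by (simp add: power2_eq_square)
    finally show ?thesis .
  qed
  have sup: "support_fun {cis \<phi> * Complex (a * cos t) (b * sin t) | t. True} \<theta> = S"
    unfolding support_fun_def eqset image_image val
  proof (rule cSup_eq_maximum)
    show "S \<in> range (\<lambda>t. u * cos t + v * sin t)" 
    proof -
      have "(\<lambda>t. u * cos t + v * sin t) t0 \<in> range (\<lambda>t. u * cos t + v * sin t)" by (rule rangeI)
      then show ?thesis using \<open>u * cos t0 + v * sin t0 = S\<close> by simp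
    qed
    show "\<And>x. x \<in> range (\<lambda>t. u * cos t + v * sin t) \<Longrightarrow> x \<le> S"
    proof -
      fix x assume "x \<in> range (\<lambda>t. u * cos t + v * sin t)"
      then obtain t where "x = u * cos t + v * sin t" by blast
      then show "x \<le> S" unfolding S_def using cs_bound[of "cos t" "sin t" u v] by simp
    qed
  qed
  show ?thesis unfolding sup S_def u_def v_def by (rule refl)
qed



lemma F_real:
  fixes a b x y t :: real
  assumes a: "a > 0" and b: "b > 0" and Q: "(x/a)\<^sup>2 + (y/b)\<^sup>2 \<le> 1"
    and ge: "x * (b * cos t) + y * (a * sin t) \<ge> a * b"
  shows "x = a * cos t \<and> y = b * sin t"
proof -
  define X where "X = x / a"
  define Y where "Y = y / b"
  have xX: "x = a * X" unfolding X_def using a by simp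
  have yY: "y = b * Y" unfolding Y_def using b by simp
  have "a * b * (X * cos t + Y * sin t) \<ge> a * b * 1"
    using ge unfolding xX yY by (simp add: algebra_simps)
  then have g1: "X * cos t + Y * sin t \<ge> 1" using a b by (simp add: mult_le_cancel_left_pos)
  have Q': "X\<^sup>2 + Y\<^sup>2 \<le> 1" using Q unfolding X_def Y_def .
  have "(X - cos t)\<^sup>2 + (Y - sin t)\<^sup>2 = X\<^sup>2 + Y\<^sup>2 - 2 * (X * cos t + Y * sin t) + ((cos t)\<^sup>2 + (sin t)\<^sup>2)"
    by (simp add: power2_eq_square algebra_simps)
  also have "\<dots> \<le> 0" using g1 Q' by simp
  finally have le0: "(X - cos t)\<^sup>2 + (Y - sin t)\<^sup>2 \<le> 0" .
  have "(X - cos t)\<^sup>2 = 0" "(Y - sin t)\<^sup>2 = 0"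
    using le0 zero_le_power2[of "X - cos t"] zero_le_power2[of "Y - sin t"] by linarith+
  then have "X = cos t" "Y = sin t" by simp_all
  then show ?thesis unfolding xX yY by simp
qed

lemma K_real:
  fixes a b x y :: real
  assumes a: "a > 0" and b: "b > 0"
    and le: "\<And>\<psi>. x * cos \<psi> + y * sin \<psi> \<le> sqrt ((a * cos \<psi>)\<^sup>2 + (b * sin \<psi>)\<^sup>2)"
  shows "(x/a)\<^sup>2 + (y/b)\<^sup>2 \<le> 1"
proof (cases "x = 0 \<and> y = 0")
  case True then show ?thesis by simp
next
  case False
  define Q where "Q = (x/a)\<^sup>2 + (y/b)\<^sup>2"
  define D where "D = sqrt ((x/a\<^sup>2)\<^sup>2 + (y/b\<^sup>2)\<^sup>2)"
  have "(x/a\<^sup>2)\<^sup>2 + (y/b\<^sup>2)\<^sup>2 > 0"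
  proof (cases "x = 0")
    case True
    then have "y \<noteq> 0" using False by simp
    then have "(y/b\<^sup>2)\<^sup>2 > 0" using b by simp
    then show ?thesis by (simp add: add_nonneg_pos)
  next
    case False
    then have "(x/a\<^sup>2)\<^sup>2 > 0" using a by simp
    then show ?thesis by (simp add: add_pos_nonneg)
  qed
  then have Dpos: "D > 0" unfolding D_def by simp
  have DD: "D\<^sup>2 = (x/a\<^sup>2)\<^sup>2 + (y/b\<^sup>2)\<^sup>2" unfolding D_def
    using \<open>(x/a\<^sup>2)\<^sup>2 + (y/b\<^sup>2)\<^sup>2 > 0\<close> by simp
  have "(x/a\<^sup>2/D)\<^sup>2 + (y/b\<^sup>2/D)\<^sup>2 = ((x/a\<^sup>2)\<^sup>2 + (y/b\<^sup>2)\<^sup>2) / D\<^sup>2"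
    by (simp only: power_divide add_divide_distrib)
  also have "\<dots> = 1" unfolding DD[symmetric] using Dpos by simp
  finally obtain \<psi> where c: "x/a\<^sup>2/D = cos \<psi>" and s: "y/b\<^sup>2/D = sin \<psi>"
    by (rule sincos_total_2pi)
  have lhs: "x * cos \<psi> + y * sin \<psi> = Q / D"
    unfolding c[symmetric] s[symmetric] Q_def using a b Dpos
    by (simp add: power2_eq_square field_simps)
  have "(a * cos \<psi>)\<^sup>2 + (b * sin \<psi>)\<^sup>2 = Q / D\<^sup>2"
    unfolding c[symmetric] s[symmetric] Q_def using a b Dpos
    by (simp add: power2_eq_square field_simps)
  then have rhs: "sqrt ((a * cos \<psi>)\<^sup>2 + (b * sin \<psi>)\<^sup>2) = sqrt Q / D"
    using Dpos by (simp add: real_sqrt_divide)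
  have "Q / D \<le> sqrt Q / D" using le[of \<psi>] unfolding lhs rhs .
  then have QS: "Q \<le> sqrt Q" using Dpos by (simp add: divide_le_cancel)
  have Q0: "Q \<ge> 0" unfolding Q_def by simp
  show ?thesis
  proof (rule ccontr)
    assume "\<not> ?thesis"
    then have "Q > 1" unfolding Q_def by simp
    then have "sqrt Q > 1" by simp
    have "sqrt Q * 1 < sqrt Q * sqrt Q"
      by (rule mult_strict_left_mono) (use \<open>sqrt Q > 1\<close> in auto)
    then have "Q > sqrt Q" using Q0 real_sqrt_mult_self[of Q] by simp
    then show False using QS by simp
  qed
qed



lemma oval_cont:
  assumes "oval_param g"
  shows "continuous_on UNIV g"
proof -
  obtain g1 where "\<forall>t. (g has_vector_derivative g1 t) (at t)"
    using assms unfolding oval_param_def by blast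
  then show ?thesis
    by (intro continuous_on_vector_derivative) (auto intro: has_vector_derivative_at_within)
qed

lemma oval_compact:
  assumes "oval_param g"
  shows "compact (g ` {0..1})"
  by (rule compact_continuous_image[OF continuous_on_subset[OF oval_cont[OF assms]]]) auto

lemma oval_homeo:
  assumes "oval_param g"
  shows "g ` {0..1} homeomorphic sphere (0::complex) 1"
proof -
  have "\<forall>t. g (t + 1) = g t" using assms unfolding oval_param_def by blast
  then have "g (0 + 1) = g 0" by blast
  then have per: "g 1 = g 0" by simp
  have inj: "inj_on g {0..<1}" using assms unfolding oval_param_def by blast
  have "simple_path g"
    unfolding simple_path_def loop_free_def
  proof
    show "path g" unfolding path_def using continuous_on_subset[OF oval_cont[OF assms]] by blast
    show "\<forall>x\<in>{0..1}. \<forall>y\<in>{0..1}. g x = g y \<longrightarrow> x = y \<or> x = 0 \<and> y = 1 \<or> x = 1 \<and> y = 0"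
    proof (intro ballI impI)
      fix x y :: real assume x: "x \<in> {0..1}" and y: "y \<in> {0..1}" and e: "g x = g y"
      have g0: "(0::real) \<in> {0..<1}" by simp
      show "x = y \<or> x = 0 \<and> y = 1 \<or> x = 1 \<and> y = 0"
      proof (cases "x = 1")
        case xt: True
        show ?thesis
        proof (cases "y = 1")
          case True then show ?thesis using xt by simp
        next
          case False
          then have "y \<in> {0..<1}" using y by auto
          moreover have "g y = g 0" using e xt per by simp
          ultimately have "y = 0" using inj g0 by (simp add: inj_on_eq_iff)
          then show ?thesis using xt by simp
        qed
      next
        case xf: False
        then have xi: "x \<in> {0..<1}" using x by auto
        show ?thesis
        proof (cases "y = 1")
          case True
          then have "g x = g 0" using e per by simp
          then have "x = 0" using inj g0 xi by (simp add: inj_on_eq_iff)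
          then show ?thesis using True by simp
        next
          case False
          then have "y \<in> {0..<1}" using y by auto
          then show ?thesis using inj e xi by (simp add: inj_on_eq_iff)
        qed
      qed
    qed
  qed
  moreover have "pathfinish g = pathstart g" using per by (simp add: pathfinish_def pathstart_def)
  ultimately have "path_image g homeomorphic sphere (0::complex) 1"
    by (rule homeomorphic_simple_path_image_circle) simp
  then show ?thesis by (simp add: path_image_def)
qed

lemma oval_width:
  assumes "oval_param g" and enz: "e \<noteq> 0"
  shows "\<exists>p\<in>g ` {0..1}. \<exists>q\<in>g ` {0..1}. p \<bullet> e \<noteq> q \<bullet> e"
proof (rule ccontr)
  assume "\<not> ?thesis"
  then have all: "\<forall>p\<in>g ` {0..1}. \<forall>q\<in>g ` {0..1}. p \<bullet> e = q \<bullet> e" by blast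
  have half: "g (1/2) \<in> g ` {0..1}" by (rule imageI) simp
  have const: "g s \<bullet> e = g (1/2) \<bullet> e" if "s \<in> {0..1}" for s
    using all half imageI[OF that, of g] by blast
  obtain g1 g2 where d1: "\<forall>t. (g has_vector_derivative g1 t) (at t)"
     and d2: "\<forall>t. (g1 has_vector_derivative g2 t) (at t)"
     and nz: "\<forall>t. Im (cnj (g1 t) * g2 t) / (cmod (g1 t)) ^ 3 \<noteq> 0"
    using assms unfolding oval_param_def by blast
  have D1: "((\<lambda>t. g t \<bullet> e) has_real_derivative g1 t \<bullet> e) (at t)" for t
    unfolding has_real_derivative_iff_has_vector_derivative
    by (rule bounded_linear.has_vector_derivative[OF bounded_linear_inner_left d1[rule_format]])
  have D2: "((\<lambda>t. g1 t \<bullet> e) has_real_derivative g2 t \<bullet> e) (at t)" for t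
    unfolding has_real_derivative_iff_has_vector_derivative
    by (rule bounded_linear.has_vector_derivative[OF bounded_linear_inner_left d2[rule_format]])
  have z1: "g1 s \<bullet> e = 0" if s: "s \<in> {0<..<1}" for s
  proof (rule DERIV_local_const[OF D1])
    show "0 < min s (1 - s)" using s by auto
    show "\<forall>y. \<bar>s - y\<bar> < min s (1 - s) \<longrightarrow> g s \<bullet> e = g y \<bullet> e"
    proof (intro allI impI)
      fix y assume "\<bar>s - y\<bar> < min s (1 - s)"
      then have "y \<in> {0..1}" using s by (auto simp: abs_less_iff)
      then show "g s \<bullet> e = g y \<bullet> e" using const[of y] const[of s] s by simp
    qed
  qed
  have z2: "g2 (1/2) \<bullet> e = 0"
  proof (rule DERIV_local_const[OF D2])
    show "0 < (1/2::real)" by simp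
    show "\<forall>y. \<bar>1/2 - y\<bar> < 1/2 \<longrightarrow> g1 (1/2) \<bullet> e = g1 y \<bullet> e"
    proof (intro allI impI)
      fix y :: real assume "\<bar>1/2 - y\<bar> < 1/2"
      then have "-(1/2) < 1/2 - y \<and> 1/2 - y < 1/2" by linarith
      then have "y \<in> {0<..<1}" by simp
      then show "g1 (1/2) \<bullet> e = g1 y \<bullet> e" using z1[of y] z1[of "1/2"] by simp
    qed
  qed
  have z1': "g1 (1/2) \<bullet> e = 0" using z1 by simp
  define x1 where "x1 = Re (g1 (1/2))"
  define y1 where "y1 = Im (g1 (1/2))"
  define x2 where "x2 = Re (g2 (1/2))"
  define y2 where "y2 = Im (g2 (1/2))"
  have h1: "x1 * Re e = - (y1 * Im e)" using z1' unfolding x1_def y1_def by (simp add: inner_complex_def eq_neg_iff_add_eq_0)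
  have h2: "x2 * Re e = - (y2 * Im e)" using z2 unfolding x2_def y2_def by (simp add: inner_complex_def eq_neg_iff_add_eq_0)
  have c1: "(x1 * y2 - y1 * x2) * Re e = 0"
  proof -
    have "(x1 * y2 - y1 * x2) * Re e = y2 * (x1 * Re e) - y1 * (x2 * Re e)" by (simp add: algebra_simps)
    also have "\<dots> = 0" unfolding h1 h2 by (simp add: algebra_simps)
    finally show ?thesis .
  qed
  have h1': "y1 * Im e = - (x1 * Re e)" using h1 by simp
  have h2': "y2 * Im e = - (x2 * Re e)" using h2 by simp
  have c2: "(x1 * y2 - y1 * x2) * Im e = 0"
  proof -
    have "(x1 * y2 - y1 * x2) * Im e = x1 * (y2 * Im e) - x2 * (y1 * Im e)" by (simp add: algebra_simps)
    also have "\<dots> = 0" unfolding h1' h2' by (simp add: algebra_simps)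
    finally show ?thesis .
  qed
  have "Re e \<noteq> 0 \<or> Im e \<noteq> 0" using enz by (simp add: complex_eq_iff)
  then have "x1 * y2 - y1 * x2 = 0" using c1 c2 by auto
  moreover have "Im (cnj (g1 (1/2)) * g2 (1/2)) = x1 * y2 - y1 * x2"
    unfolding x1_def y1_def x2_def y2_def by simp
  ultimately show False using nz by auto
qed



lemma ode_sol:
  fixes u f1 f2 f3 :: "real \<Rightarrow> real"
  assumes d0: "\<forall>\<theta>. (u has_real_derivative f1 \<theta>) (at \<theta>)"
    and d1: "\<forall>\<theta>. (f1 has_real_derivative f2 \<theta>) (at \<theta>)"
    and d2: "\<forall>\<theta>. (f2 has_real_derivative f3 \<theta>) (at \<theta>)"
    and eq: "\<forall>\<theta>. f3 \<theta> + 4 * f1 \<theta> = 0"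
  shows "\<exists>c A B. \<forall>\<theta>. u \<theta> = c + A * cos (2*\<theta>) + B * sin (2*\<theta>)"
proof -
  define \<alpha> where "\<alpha> = f1 0"
  define \<beta> where "\<beta> = f2 0 / 2"
  define z where "z = (\<lambda>\<theta>. f1 \<theta> - \<alpha> * cos (2*\<theta>) - \<beta> * sin (2*\<theta>))"
  define z1 where "z1 = (\<lambda>\<theta>. f2 \<theta> + 2 * \<alpha> * sin (2*\<theta>) - 2 * \<beta> * cos (2*\<theta>))"
  have Dz: "(z has_real_derivative z1 \<theta>) (at \<theta>)" for \<theta>
    unfolding z_def z1_def
    by (auto intro!: derivative_eq_intros d1[rule_format])
  have Dz1: "(z1 has_real_derivative (-4 * z \<theta>)) (at \<theta>)" for \<theta>
  proof -
    have "(z1 has_real_derivative (f3 \<theta> + 4 * \<alpha> * cos (2*\<theta>) + 4 * \<beta> * sin (2*\<theta>))) (at \<theta>)"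
      unfolding z1_def
      by (auto intro!: derivative_eq_intros d2[rule_format])
    moreover have "f3 \<theta> + 4 * \<alpha> * cos (2*\<theta>) + 4 * \<beta> * sin (2*\<theta>) = -4 * z \<theta>"
      using eq[rule_format, of \<theta>] unfolding z_def by (simp add: algebra_simps)
    ultimately show ?thesis by simp
  qed
  define E where "E = (\<lambda>\<theta>. (z1 \<theta>)\<^sup>2 + 4 * (z \<theta>)\<^sup>2)"
  have DE: "(E has_real_derivative 0) (at \<theta>)" for \<theta>
  proof -
    have "(E has_real_derivative (2 * z1 \<theta> * (-4 * z \<theta>) + 4 * (2 * z \<theta> * z1 \<theta>))) (at \<theta>)"
      unfolding E_def
      by (auto intro!: derivative_eq_intros Dz Dz1)
    then show ?thesis by (simp add: algebra_simps)
  qed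
  have E0: "E 0 = 0" unfolding E_def z_def z1_def \<alpha>_def \<beta>_def by simp
  have z0: "z \<theta> = 0" for \<theta>
  proof -
    have "E \<theta> = E 0" using DE DERIV_isconst_all by blast
    then have "(z1 \<theta>)\<^sup>2 + 4 * (z \<theta>)\<^sup>2 = 0" using E0 unfolding E_def by simp
    then have "(z \<theta>)\<^sup>2 = 0" using zero_le_power2[of "z1 \<theta>"] zero_le_power2[of "z \<theta>"] by linarith
    then show ?thesis by simp
  qed
  define r where "r = (\<lambda>\<theta>. u \<theta> - (\<alpha>/2) * sin (2*\<theta>) + (\<beta>/2) * cos (2*\<theta>))"
  have Dr: "(r has_real_derivative 0) (at \<theta>)" for \<theta>
  proof -
    have "(r has_real_derivative (f1 \<theta> - (\<alpha>/2) * (cos (2*\<theta>) * 2) + (\<beta>/2) * (- sin (2*\<theta>) * 2))) (at \<theta>)"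
      unfolding r_def
      by (auto intro!: derivative_eq_intros d0[rule_format])
    moreover have "f1 \<theta> - (\<alpha>/2) * (cos (2*\<theta>) * 2) + (\<beta>/2) * (- sin (2*\<theta>) * 2) = z \<theta>"
      unfolding z_def by simp
    ultimately show ?thesis using z0[of \<theta>] by simp
  qed
  have "u \<theta> = r 0 + (-\<beta>/2) * cos (2*\<theta>) + (\<alpha>/2) * sin (2*\<theta>)" for \<theta>
  proof -
    have "r \<theta> = r 0" using Dr DERIV_isconst_all by blast
    then show ?thesis unfolding r_def by simp
  qed
  then show ?thesis by blast
qed



lemma ellipse_h2:
  fixes a b \<phi> :: real
  assumes a: "a > 0" and b: "b > 0"
  shows "(support_fun {cis \<phi> * Complex (a * cos t) (b * sin t) | t. True} x)\<^sup>2
       = (a\<^sup>2 + b\<^sup>2)/2 + (a\<^sup>2 - b\<^sup>2)/2 * cos (2*x - 2*\<phi>)"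
proof -
  have "(support_fun {cis \<phi> * Complex (a * cos t) (b * sin t) | t. True} x)\<^sup>2
     = (a * cos (x - \<phi>))\<^sup>2 + (b * sin (x - \<phi>))\<^sup>2"
    unfolding ellipse_support[OF a b] by simp
  also have "\<dots> = (a\<^sup>2 + b\<^sup>2)/2 + (a\<^sup>2 - b\<^sup>2)/2 * cos (2*(x - \<phi>))"
    unfolding cos_double power_mult_distrib sin_squared_eq[of "x - \<phi>"]
    by (simp add: field_simps)
  also have "2*(x - \<phi>) = 2*x - 2*\<phi>" by simp
  finally show ?thesis .
qed

lemma forward_dir:
  assumes "is_centered_ellipse C"
  shows "\<exists>f1 f2 f3 :: real \<Rightarrow> real.
       (\<forall>\<theta>. ((\<lambda>x. (support_fun C x)\<^sup>2) has_real_derivative f1 \<theta>) (at \<theta>)) \<and>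
       (\<forall>\<theta>. (f1 has_real_derivative f2 \<theta>) (at \<theta>)) \<and>
       (\<forall>\<theta>. (f2 has_real_derivative f3 \<theta>) (at \<theta>)) \<and>
       (\<forall>\<theta>. f3 \<theta> + 4 * f1 \<theta> = 0)"
proof -
  obtain a b \<phi> where a: "a > 0" and b: "b > 0"
    and C: "C = {cis \<phi> * Complex (a * cos t) (b * sin t) | t. True}"
    using assms unfolding is_centered_ellipse_def by blast
  define c where "c = (a\<^sup>2 + b\<^sup>2)/2"
  define d where "d = (a\<^sup>2 - b\<^sup>2)/2"
  have h: "(\<lambda>x. (support_fun C x)\<^sup>2) = (\<lambda>x. c + d * cos (2*x - 2*\<phi>))"
    unfolding C c_def d_def using ellipse_h2[OF a b] by simp
  define f1 where "f1 = (\<lambda>x. - (2*d) * sin (2*x - 2*\<phi>))"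
  define f2 where "f2 = (\<lambda>x. - (4*d) * cos (2*x - 2*\<phi>))"
  define f3 where "f3 = (\<lambda>x. (8*d) * sin (2*x - 2*\<phi>))"
  have "((\<lambda>x. c + d * cos (2*x - 2*\<phi>)) has_real_derivative f1 \<theta>) (at \<theta>)" for \<theta>
    unfolding f1_def by (auto intro!: derivative_eq_intros)
  moreover have "(f1 has_real_derivative f2 \<theta>) (at \<theta>)" for \<theta>
    unfolding f1_def f2_def by (auto intro!: derivative_eq_intros)
  moreover have "(f2 has_real_derivative f3 \<theta>) (at \<theta>)" for \<theta>
    unfolding f2_def f3_def by (auto intro!: derivative_eq_intros)
  moreover have "f3 \<theta> + 4 * f1 \<theta> = 0" for \<theta> unfolding f1_def f3_def by simp
  ultimately show ?thesis unfolding h by blast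
qed



lemma support_upper:
  assumes "compact C" "p \<in> C"
  shows "p \<bullet> cis \<theta> \<le> support_fun C \<theta>"
proof -
  have "compact ((\<lambda>p. p \<bullet> cis \<theta>) ` C)"
    by (rule compact_continuous_image[OF _ assms(1)]) (intro continuous_intros)
  then have "bdd_above ((\<lambda>p. p \<bullet> cis \<theta>) ` C)" by (intro bounded_imp_bdd_above compact_imp_bounded)
  then show ?thesis unfolding support_fun_def by (rule cSUP_upper[OF assms(2)])
qed

lemma support_attained:
  assumes "compact C" "C \<noteq> {}"
  shows "\<exists>p\<in>C. p \<bullet> cis \<theta> = support_fun C \<theta>"
proof -
  have "compact ((\<lambda>p. p \<bullet> cis \<theta>) ` C)"
    by (rule compact_continuous_image[OF _ assms(1)]) (intro continuous_intros)
  moreover have "(\<lambda>p. p \<bullet> cis \<theta>) ` C \<noteq> {}" using assms(2) by simp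
  ultimately obtain s where s: "s \<in> (\<lambda>p. p \<bullet> cis \<theta>) ` C" "\<forall>t\<in>(\<lambda>p. p \<bullet> cis \<theta>) ` C. t \<le> s"
    using compact_attains_sup by blast
  then have "support_fun C \<theta> = s" unfolding support_fun_def by (intro cSup_eq_maximum) auto
  then show ?thesis using s(1) by auto
qed

definition ellL :: "real \<Rightarrow> real \<Rightarrow> real \<Rightarrow> complex \<Rightarrow> complex" where
  "ellL a b \<phi> z = cis \<phi> * Complex (a * Re z) (b * Im z)"

lemma ellL_linear: "linear (ellL a b \<phi>)"
proof (rule linearI)
  show "ellL a b \<phi> (x + y) = ellL a b \<phi> x + ellL a b \<phi> y" for x y
    unfolding ellL_def by (simp add: complex_eq_iff algebra_simps)
  show "ellL a b \<phi> (r *\<^sub>R x) = r *\<^sub>R ellL a b \<phi> x" for r x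
    unfolding ellL_def by (simp add: complex_eq_iff algebra_simps scaleR_conv_of_real)
qed

lemma ellL_inj:
  assumes "a > 0" "b > 0"
  shows "inj (ellL a b \<phi>)"
proof
  fix x y assume "ellL a b \<phi> x = ellL a b \<phi> y"
  then have "Complex (a * Re x) (b * Im x) = Complex (a * Re y) (b * Im y)"
    unfolding ellL_def by simp
  then show "x = y" using assms by (simp add: complex_eq_iff)
qed

lemma ellL_image:
  "{cis \<phi> * Complex (a * cos t) (b * sin t) | t. True} = ellL a b \<phi> ` sphere 0 1"
proof
  show "{cis \<phi> * Complex (a * cos t) (b * sin t) | t. True} \<subseteq> ellL a b \<phi> ` sphere 0 1"
  proof
    fix p assume "p \<in> {cis \<phi> * Complex (a * cos t) (b * sin t) | t. True}"
    then obtain t where p: "p = cis \<phi> * Complex (a * cos t) (b * sin t)" by blast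
    have "cis t \<in> sphere 0 1" by simp
    moreover have "p = ellL a b \<phi> (cis t)" unfolding p ellL_def by simp
    ultimately show "p \<in> ellL a b \<phi> ` sphere 0 1" by blast
  qed
  show "ellL a b \<phi> ` sphere 0 1 \<subseteq> {cis \<phi> * Complex (a * cos t) (b * sin t) | t. True}"
  proof
    fix p assume "p \<in> ellL a b \<phi> ` sphere 0 1"
    then obtain z where z: "z \<in> sphere 0 1" "p = ellL a b \<phi> z" by blast
    have "(Re z)\<^sup>2 + (Im z)\<^sup>2 = 1" using z(1) cmod_power2[of z] by simp
    then obtain t where "Re z = cos t" "Im z = sin t" by (rule sincos_total_2pi)
    then have "p = cis \<phi> * Complex (a * cos t) (b * sin t)" unfolding z(2) ellL_def by simp
    then show "p \<in> {cis \<phi> * Complex (a * cos t) (b * sin t) | t. True}" by blast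
  qed
qed

lemma ellipse_homeo:
  assumes "a > 0" "b > 0"
  shows "{cis \<phi> * Complex (a * cos t) (b * sin t) | t. True} homeomorphic sphere (0::complex) 1"
  unfolding ellL_image
  by (subst homeomorphic_sym) (rule linear_homeomorphic_image[OF ellL_linear ellL_inj[OF assms]])

lemma cis_decomp: "p = cis \<phi> * Complex (Re (cnj (cis \<phi>) * p)) (Im (cnj (cis \<phi>) * p))"
proof -
  have 1: "Complex (Re (cnj (cis \<phi>) * p)) (Im (cnj (cis \<phi>) * p)) = cnj (cis \<phi>) * p" by (rule complex_surj)
  have "cis \<phi> * (cnj (cis \<phi>) * p) = (cis \<phi> * cis (-\<phi>)) * p" by (simp only: cis_cnj mult.assoc)
  also have "\<dots> = p" by (simp only: cis_mult) simp
  finally show ?thesis unfolding 1 by simp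
qed

lemma ellipse_eq:
  fixes a b \<phi> :: real
  assumes a: "a > 0" and b: "b > 0" and cC: "compact C" and ne: "C \<noteq> {}"
    and hC: "C homeomorphic sphere (0::complex) 1"
    and hs: "\<And>\<theta>. support_fun C \<theta> = support_fun {cis \<phi> * Complex (a * cos t) (b * sin t) | t. True} \<theta>"
  shows "C = {cis \<phi> * Complex (a * cos t) (b * sin t) | t. True}"
proof -
  define E where "E = {cis \<phi> * Complex (a * cos t) (b * sin t) | t. True}"
  have inK: "(x/a)\<^sup>2 + (y/b)\<^sup>2 \<le> 1" if "cis \<phi> * Complex x y \<in> C" for x y
  proof (rule K_real[OF a b])
    fix \<psi>
    have "(cis \<phi> * Complex x y) \<bullet> cis (\<phi> + \<psi>) \<le> support_fun C (\<phi> + \<psi>)"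
      by (rule support_upper[OF cC that])
    then show "x * cos \<psi> + y * sin \<psi> \<le> sqrt ((a * cos \<psi>)\<^sup>2 + (b * sin \<psi>)\<^sup>2)"
      unfolding hs ellipse_support[OF a b] inner_cis_mult by simp
  qed
  have EC: "E \<subseteq> C"
  proof
    fix q assume "q \<in> E"
    then obtain t where q: "q = cis \<phi> * Complex (a * cos t) (b * sin t)" unfolding E_def by blast
    define M where "M = sqrt ((b * cos t)\<^sup>2 + (a * sin t)\<^sup>2)"
    have "(b * cos t)\<^sup>2 + (a * sin t)\<^sup>2 > 0"
    proof (cases "cos t = 0")
      case True
      then have "sin t \<noteq> 0" using sin_cos_squared_add[of t] by auto
      then have "(a * sin t)\<^sup>2 > 0" using a by simp
      then show ?thesis by (simp add: add_nonneg_pos)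
    next
      case False
      then have "(b * cos t)\<^sup>2 > 0" using b by simp
      then show ?thesis by (simp add: add_pos_nonneg)
    qed
    then have Mpos: "M > 0" and MM: "M\<^sup>2 = (b * cos t)\<^sup>2 + (a * sin t)\<^sup>2" unfolding M_def by simp_all
    have "(b * cos t / M)\<^sup>2 + (a * sin t / M)\<^sup>2 = ((b * cos t)\<^sup>2 + (a * sin t)\<^sup>2) / M\<^sup>2"
      by (simp only: power_divide add_divide_distrib)
    also have "\<dots> = 1" unfolding MM[symmetric] using Mpos by simp
    finally obtain \<psi> where c: "b * cos t / M = cos \<psi>" and s: "a * sin t / M = sin \<psi>"
      by (rule sincos_total_2pi)
    obtain p where pC: "p \<in> C" and pv: "p \<bullet> cis (\<phi> + \<psi>) = support_fun C (\<phi> + \<psi>)"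
      using support_attained[OF cC ne] by blast
    define x where "x = Re (cnj (cis \<phi>) * p)"
    define y where "y = Im (cnj (cis \<phi>) * p)"
    have p: "p = cis \<phi> * Complex x y" unfolding x_def y_def by (rule cis_decomp)
    have Q: "(x/a)\<^sup>2 + (y/b)\<^sup>2 \<le> 1" using inK pC p by simp
    have "(a * cos \<psi>)\<^sup>2 + (b * sin \<psi>)\<^sup>2 = (a * b / M)\<^sup>2 * ((cos t)\<^sup>2 + (sin t)\<^sup>2)"
    proof -
      have gen: "\<And>A B::real. (a * (b * A / M))\<^sup>2 + (b * (a * B / M))\<^sup>2 = (a * b / M)\<^sup>2 * (A\<^sup>2 + B\<^sup>2)"
        using Mpos by (simp add: power2_eq_square field_simps)
      show ?thesis unfolding c[symmetric] s[symmetric] by (rule gen)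
    qed
    then have "(a * cos \<psi>)\<^sup>2 + (b * sin \<psi>)\<^sup>2 = (a * b / M)\<^sup>2" by simp
    then have hv: "support_fun C (\<phi> + \<psi>) = a * b / M"
      unfolding hs ellipse_support[OF a b] using a b Mpos by simp
    have "x * cos \<psi> + y * sin \<psi> = a * b / M" using pv unfolding hv p inner_cis_mult by simp
    then have "(x * (b * cos t) + y * (a * sin t)) / M = a * b / M"
      unfolding c[symmetric] s[symmetric] by (simp add: add_divide_distrib)
    then have "x * (b * cos t) + y * (a * sin t) = a * b" using Mpos by (simp add: divide_cancel_right)
    then have "x = a * cos t \<and> y = b * sin t" using F_real[OF a b Q] by simp
    then have "p = q" unfolding p q by simp
    then show "q \<in> C" using pC by simp
  qed
  have "E = C" by (rule homeo_circle_subset_eq[OF hC _ EC]) (unfold E_def, rule ellipse_homeo[OF a b])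
  then show ?thesis unfolding E_def by simp
qed



theorem mainTheorem12:
  fixes C :: "complex set"
  assumes "is_oval C"
  shows "is_centered_ellipse C \<longleftrightarrow>
    (\<exists>f1 f2 f3 :: real \<Rightarrow> real.
       (\<forall>\<theta>. ((\<lambda>x. (support_fun C x)\<^sup>2) has_real_derivative f1 \<theta>) (at \<theta>)) \<and>
       (\<forall>\<theta>. (f1 has_real_derivative f2 \<theta>) (at \<theta>)) \<and>
       (\<forall>\<theta>. (f2 has_real_derivative f3 \<theta>) (at \<theta>)) \<and>
       (\<forall>\<theta>. f3 \<theta> + 4 * f1 \<theta> = 0))"
proof
  assume "is_centered_ellipse C"
  then show "\<exists>f1 f2 f3 :: real \<Rightarrow> real.
       (\<forall>\<theta>. ((\<lambda>x. (support_fun C x)\<^sup>2) has_real_derivative f1 \<theta>) (at \<theta>)) \<and>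
       (\<forall>\<theta>. (f1 has_real_derivative f2 \<theta>) (at \<theta>)) \<and>
       (\<forall>\<theta>. (f2 has_real_derivative f3 \<theta>) (at \<theta>)) \<and>
       (\<forall>\<theta>. f3 \<theta> + 4 * f1 \<theta> = 0)" by (rule forward_dir)
next
  assume "\<exists>f1 f2 f3 :: real \<Rightarrow> real.
       (\<forall>\<theta>. ((\<lambda>x. (support_fun C x)\<^sup>2) has_real_derivative f1 \<theta>) (at \<theta>)) \<and>
       (\<forall>\<theta>. (f1 has_real_derivative f2 \<theta>) (at \<theta>)) \<and>
       (\<forall>\<theta>. (f2 has_real_derivative f3 \<theta>) (at \<theta>)) \<and>
       (\<forall>\<theta>. f3 \<theta> + 4 * f1 \<theta> = 0)"
  then obtain f1 f2 f3 :: "real \<Rightarrow> real" where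
      d0: "\<forall>\<theta>. ((\<lambda>x. (support_fun C x)\<^sup>2) has_real_derivative f1 \<theta>) (at \<theta>)"
    and d1: "\<forall>\<theta>. (f1 has_real_derivative f2 \<theta>) (at \<theta>)"
    and d2: "\<forall>\<theta>. (f2 has_real_derivative f3 \<theta>) (at \<theta>)"
    and eq: "\<forall>\<theta>. f3 \<theta> + 4 * f1 \<theta> = 0" by blast
  obtain g where og: "oval_param g" and Cg: "C = g ` {0..1}"
    using assms unfolding is_oval_def by blast
  define h where "h = support_fun C"
  have cC: "compact C" unfolding Cg by (rule oval_compact[OF og])
  have ne: "C \<noteq> {}" unfolding Cg by simp
  obtain c A B where u: "\<forall>\<theta>. (\<lambda>x. (support_fun C x)\<^sup>2) \<theta> = c + A * cos (2*\<theta>) + B * sin (2*\<theta>)"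
    using ode_sol[OF d0 d1 d2 eq] by blast
  have u': "(h \<theta>)\<^sup>2 = c + A * cos (2*\<theta>) + B * sin (2*\<theta>)" for \<theta>
    using u unfolding h_def by simp
  have per: "(h (\<theta> + pi))\<^sup>2 = (h \<theta>)\<^sup>2" for \<theta>
  proof -
    have "cos (2 * (\<theta> + pi)) = cos (2*\<theta>)" "sin (2 * (\<theta> + pi)) = sin (2*\<theta>)"
      by (simp_all add: distrib_left cos_add sin_add)
    then show ?thesis unfolding u' by simp
  qed
  have width: "h \<theta> + h (\<theta> + pi) > 0" for \<theta>
  proof -
    have "cis \<theta> \<noteq> 0" by simp
    from oval_width[OF og this] obtain p q where pC: "p \<in> C" and qC: "q \<in> C"
      and pq: "p \<bullet> cis \<theta> \<noteq> q \<bullet> cis \<theta>" unfolding Cg by blast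
    have cm: "cis (\<theta> + pi) = - cis \<theta>" by (simp add: complex_eq_iff)
    have "p \<bullet> cis \<theta> \<le> h \<theta>" "q \<bullet> cis \<theta> \<le> h \<theta>"
      unfolding h_def by (rule support_upper[OF cC pC], rule support_upper[OF cC qC])
    moreover have "p \<bullet> cis (\<theta> + pi) \<le> h (\<theta> + pi)" "q \<bullet> cis (\<theta> + pi) \<le> h (\<theta> + pi)"
      unfolding h_def by (rule support_upper[OF cC pC], rule support_upper[OF cC qC])
    then have "- (p \<bullet> cis \<theta>) \<le> h (\<theta> + pi)" "- (q \<bullet> cis \<theta>) \<le> h (\<theta> + pi)"
      unfolding cm by simp_all
    ultimately show ?thesis using pq by linarith
  qed
  have hpos: "h \<theta> > 0" for \<theta>
  proof -
    have "h \<theta> = h (\<theta> + pi) \<or> h \<theta> = - h (\<theta> + pi)" using per[of \<theta>] power2_eq_iff by metis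
    then show ?thesis using width[of \<theta>] by auto
  qed
  define R where "R = sqrt (A\<^sup>2 + B\<^sup>2)"
  have R0: "R \<ge> 0" unfolding R_def by simp
  obtain \<psi> where AB: "A = R * cos \<psi>" "B = R * sin \<psi>"
  proof (cases "R = 0")
    case True
    then have "A\<^sup>2 + B\<^sup>2 = 0" unfolding R_def by simp
    then have "A = 0" "B = 0" using zero_le_power2[of A] zero_le_power2[of B] by auto
    then show ?thesis using that[of 0] True by simp
  next
    case False
    then have Rp: "R > 0" using R0 by simp
    have RR: "R\<^sup>2 = A\<^sup>2 + B\<^sup>2" unfolding R_def by simp
    have "(A/R)\<^sup>2 + (B/R)\<^sup>2 = (A\<^sup>2 + B\<^sup>2) / R\<^sup>2" by (simp only: power_divide add_divide_distrib)
    also have "\<dots> = 1" unfolding RR[symmetric] using Rp by simp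
    finally obtain s where "A/R = cos s" "B/R = sin s" by (rule sincos_total_2pi)
    then show ?thesis using that[of s] Rp by (simp add: field_simps)
  qed
  define \<phi> where "\<phi> = \<psi> / 2"
  have uu: "(h \<theta>)\<^sup>2 = c + R * cos (2*\<theta> - 2*\<phi>)" for \<theta>
    unfolding u' AB \<phi>_def by (simp add: cos_diff algebra_simps)
  have cR: "c - R > 0"
  proof -
    have "(h (\<phi> + pi/2))\<^sup>2 > 0" using hpos[of "\<phi> + pi/2"] by simp
    moreover have "cos (2 * (\<phi> + pi/2) - 2 * \<phi>) = -1" by (simp add: algebra_simps)
    ultimately show ?thesis unfolding uu by simp
  qed
  define a where "a = sqrt (c + R)"
  define b where "b = sqrt (c - R)"
  have a: "a > 0" unfolding a_def using cR R0 by simp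
  have b: "b > 0" unfolding b_def using cR by simp
  have a2: "a\<^sup>2 = c + R" unfolding a_def using cR R0 by simp
  have b2: "b\<^sup>2 = c - R" unfolding b_def using cR by simp
  have hs: "support_fun C \<theta> = support_fun {cis \<phi> * Complex (a * cos t) (b * sin t) | t. True} \<theta>" for \<theta>
  proof -
    have "(support_fun {cis \<phi> * Complex (a * cos t) (b * sin t) | t. True} \<theta>)\<^sup>2 = (h \<theta>)\<^sup>2"
      unfolding ellipse_h2[OF a b] uu a2 b2 by (simp add: algebra_simps)
    moreover have "support_fun {cis \<phi> * Complex (a * cos t) (b * sin t) | t. True} \<theta> \<ge> 0"
      using ellipse_support[OF a b, of \<phi> \<theta>] real_sqrt_ge_zero[of "(a * cos (\<theta> - \<phi>))\<^sup>2 + (b * sin (\<theta> - \<phi>))\<^sup>2"]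
      by (simp only: zero_le_power2 add_nonneg_nonneg)
    ultimately have "support_fun {cis \<phi> * Complex (a * cos t) (b * sin t) | t. True} \<theta> = h \<theta>"
      using less_imp_le[OF hpos[of \<theta>]] by (rule power2_eq_imp_eq)
    then show ?thesis unfolding h_def by simp
  qed
  have "C = {cis \<phi> * Complex (a * cos t) (b * sin t) | t. True}"
    by (rule ellipse_eq[OF a b cC ne _ hs]) (unfold Cg, rule oval_homeo[OF og])
  then show "is_centered_ellipse C" unfolding is_centered_ellipse_def using a b by blast
qed


end
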